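(* Let $\Gamma$ be a group, $S$ a $\Gamma$-graded semigroup with local units, and $S_\Gamma$ the corresponding stable graded Rees matrix semigroup. Then: (1) $E(S_\Gamma)=\{e_{\alpha\alpha}(u):u\in E(S),\alpha\in\Gamma\}$; (2) $S_\Gamma$ has local units; (3) $S_\Gamma$ is strongly graded; (4) the map $\phi:S\#\Gamma\to(S_\Gamma)_\varepsilon$ with $\phi(sP_\alpha)=e_{\deg(s)\alpha,\alpha}(s)$ for $sP_\alpha\neq0$ and $\phi(0)=0$ is a semigroup isomorphism; (5) $S$ is an inverse semigroup if and only if $S_\Gamma$ is an inverse semigroup.
   Context: Semigroups have a zero; $S$ is $\Gamma$-graded via $\deg:S\setminus\{0\}\to\Gamma$ with $\deg(st)=\deg(s)\deg(t)$ whenever $st\neq0$; $S_\alpha=\deg^{-1}(\alpha)\cup\{0\}$; strongly graded means $S_\alpha S_\beta=S_{\alpha\beta}$; local units: each $s$ has idempotents $u,v$ with $us=s=sv$; $E(\cdot)$ denotes idempotents. $S_\Gamma=\{e_{\alpha\beta}(s):\alpha,\beta\in\Gamma,s\in S\}$, where all $e_{\alpha\beta}(0)$ are identified with a single zero $0$, with multiplication $e_{\alpha\beta}(s)e_{\delta\gamma}(t)=e_{\alpha\gamma}(st)$ if $\beta=\delta$ and $0$ otherwise, and $\Gamma$-grading $\deg(e_{\alpha\beta}(s))=\alpha^{-1}\deg(s)\beta$ for nonzero elements. The smash product $S\#\Gamma=\{sP_\alpha:s\in S\setminus\{0\},\alpha\in\Gamma\}\cup\{0\}$ has product $(sP_\alpha)(tP_\beta)=stP_\beta$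 if $st\neq0$ and $t\in S_{\alpha\beta^{-1}}$, else $0$. *)

theory Defs
  imports Main
begin

text \<open>The group \<Gamma> is written additively
 (class group_add, not necessarily commutative): identity 0, product +,
 inverse uminus.\<close>

definition idempotents :: "'s set \<Rightarrow> ('s \<Rightarrow> 's \<Rightarrow> 's) \<Rightarrow> 's set" where
  "idempotents C m = {x \<in> C. m x x = x}"

definition has_local_units :: "'s set \<Rightarrow> ('s \<Rightarrow> 's \<Rightarrow> 's) \<Rightarrow> bool" where
  "has_local_units C m \<longleftrightarrow>
     (\<forall>s\<in>C. \<exists>u\<in>idempotents C m. \<exists>v\<in>idempotents C m. m u s = s \<and> m s v = s)"

definition is_graded :: "'s set \<Rightarrow> ('s \<Rightarrow> 's \<Rightarrow> 's) \<Rightarrow> 's \<Rightarrow> ('s \<Rightarrow> 'g::group_add) \<Rightarrow> bool" where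
  "is_graded C m z deg \<longleftrightarrow>
     (\<forall>s\<in>C. \<forall>t\<in>C. s \<noteq> z \<longrightarrow> t \<noteq> z \<longrightarrow> m s t \<noteq> z \<longrightarrow> deg (m s t) = deg s + deg t)"

definition component :: "'s set \<Rightarrow> 's \<Rightarrow> ('s \<Rightarrow> 'g) \<Rightarrow> 'g \<Rightarrow> 's set" where
  "component C z deg \<alpha> = {s \<in> C. s \<noteq> z \<and> deg s = \<alpha>} \<union> {z}"

definition set_prod :: "('s \<Rightarrow> 's \<Rightarrow> 's) \<Rightarrow> 's set \<Rightarrow> 's set \<Rightarrow> 's set" where
  "set_prod m A B = {m a b | a b. a \<in> A \<and> b \<in> B}"

definition strongly_graded :: "'s set \<Rightarrow> ('s \<Rightarrow> 's \<Rightarrow> 's) \<Rightarrow> 's \<Rightarrow> ('s \<Rightarrow> 'g::group_add) \<Rightarrow> bool" where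
  "strongly_graded C m z deg \<longleftrightarrow>
     (\<forall>\<alpha> \<beta>. set_prod m (component C z deg \<alpha>) (component C z deg \<beta>)
              = component C z deg (\<alpha> + \<beta>))"

definition inverse_semigroup :: "'s set \<Rightarrow> ('s \<Rightarrow> 's \<Rightarrow> 's) \<Rightarrow> bool" where
  "inverse_semigroup C m \<longleftrightarrow>
     (\<forall>s\<in>C. \<exists>!t. t \<in> C \<and> m (m s t) s = s \<and> m (m t s) t = t)"

definition semigroup_iso :: "('s \<Rightarrow> 't) \<Rightarrow> 's set \<Rightarrow> ('s \<Rightarrow> 's \<Rightarrow> 's) \<Rightarrow> 't set \<Rightarrow> ('t \<Rightarrow> 't \<Rightarrow> 't) \<Rightarrow> bool" where
  "semigroup_iso f C m D n \<longleftrightarrow>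
     bij_betw f C D \<and> (\<forall>x\<in>C. \<forall>y\<in>C. f (m x y) = n (f x) (f y))"

datatype ('g, 'a) rees = RZero | RE 'g 'g 'a

text \<open>e_{alpha beta}(s), with all e_{alpha beta}(0) identified with the zero.\<close>
definition ee :: "'g \<Rightarrow> 'g \<Rightarrow> 'a::zero \<Rightarrow> ('g, 'a) rees" where
  "ee \<alpha> \<beta> s = (if s = 0 then RZero else RE \<alpha> \<beta> s)"

definition rees_carrier :: "('g, 'a::zero) rees set" where
  "rees_carrier = {RZero} \<union> {RE \<alpha> \<beta> s | \<alpha> \<beta> s. s \<noteq> 0}"

fun rees_mult :: "('g, 'a::{semigroup_mult,mult_zero}) rees \<Rightarrow> ('g, 'a) rees \<Rightarrow> ('g, 'a) rees" where
  "rees_mult (RE \<alpha> \<beta> s) (RE \<delta> \<gamma> t) = (if \<beta> = \<delta> then ee \<alpha> \<gamma> (s * t) else RZero)"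
| "rees_mult _ _ = RZero"

fun rees_deg :: "('a \<Rightarrow> 'g::group_add) \<Rightarrow> ('g, 'a) rees \<Rightarrow> 'g" where
  "rees_deg deg (RE \<alpha> \<beta> s) = - \<alpha> + deg s + \<beta>"
| "rees_deg deg RZero = 0"

datatype ('a, 'g) smash = SZero | SP 'a 'g

definition smash_carrier :: "('a::zero, 'g) smash set" where
  "smash_carrier = {SZero} \<union> {SP s \<alpha> | s \<alpha>. s \<noteq> 0}"

fun smash_mult :: "('a \<Rightarrow> 'g::group_add) \<Rightarrow> ('a::{semigroup_mult,mult_zero}, 'g) smash
                    \<Rightarrow> ('a, 'g) smash \<Rightarrow> ('a, 'g) smash" where
  "smash_mult deg (SP s \<alpha>) (SP t \<beta>) =
     (if s * t \<noteq> 0 \<and> t \<noteq> 0 \<and> deg t = \<alpha> + - \<beta> then SP (s * t) \<beta> else SZero)"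
| "smash_mult deg _ _ = SZero"

fun phi :: "('a \<Rightarrow> 'g::group_add) \<Rightarrow> ('a, 'g) smash \<Rightarrow> ('g, 'a) rees" where
  "phi deg (SP s \<alpha>) = RE (deg s + \<alpha>) \<alpha> s"
| "phi deg SZero = RZero"

end

theory Submission
  imports Defs
begin

lemma rm_RZero2[simp]: "rees_mult x RZero = RZero"
  by (cases x) auto

lemma ee_zero[simp]: "ee a b 0 = RZero" by (simp add: ee_def)
lemma ee_nz[simp]: "s \<noteq> 0 \<Longrightarrow> ee a b s = RE a b s" by (simp add: ee_def)

lemma part1:
  "idempotents (rees_carrier :: ('g, 'a::{semigroup_mult,mult_zero}) rees set) rees_mult
           = {ee (\<alpha>::'g) \<alpha> u | u \<alpha>. u \<in> idempotents (UNIV :: 'a set) (*)}"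
proof (rule set_eqI, rule iffI)
  fix x :: "('g,'a) rees"
  assume "x \<in> idempotents rees_carrier rees_mult"
  then have x: "x \<in> rees_carrier" "rees_mult x x = x" by (auto simp: idempotents_def)
  show "x \<in> {ee (\<alpha>::'g) \<alpha> u | u \<alpha>. u \<in> idempotents (UNIV :: 'a set) (*)}"
  proof (cases x)
    case RZero
    then have "x = ee (undefined::'g) undefined (0::'a)" by simp
    moreover have "(0::'a) \<in> idempotents UNIV (*)" by (simp add: idempotents_def)
    ultimately show ?thesis by blast
  next
    case (RE a b s)
    with x have "s \<noteq> 0" by (auto simp: rees_carrier_def)
    with x RE have "a = b" "s * s = s" by (auto simp: ee_def split: if_splits)
    then have "x = ee a a s" using RE \<open>s \<noteq> 0\<close> by simp
    with \<open>s * s = s\<close> show ?thesis by (auto simp: idempotents_def)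
  qed
next
  fix x :: "('g,'a) rees"
  assume "x \<in> {ee (\<alpha>::'g) \<alpha> u | u \<alpha>. u \<in> idempotents (UNIV :: 'a set) (*)}"
  then obtain u a where x: "x = ee a a u" and u: "u * u = u" by (auto simp: idempotents_def)
  show "x \<in> idempotents rees_carrier rees_mult"
    using x u by (cases "u = 0") (auto simp: idempotents_def rees_carrier_def)
qed

lemma deg_idem:
  fixes deg :: "'a::{semigroup_mult,mult_zero} \<Rightarrow> 'g::group_add"
  assumes graded: "is_graded (UNIV :: 'a set) (*) 0 deg"
    and "u * u = u" "u \<noteq> 0"
  shows "deg u = 0"
proof -
  have "deg u = deg u + deg u" using graded assms(2,3) unfolding is_graded_def
    by (metis UNIV_I)
  then have "deg u + deg u = deg u + 0" by simp
  then show ?thesis by (rule add_left_imp_eq)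
qed

lemma part2:
  assumes lu: "has_local_units (UNIV :: 'a::{semigroup_mult,mult_zero} set) (*)"
  shows "has_local_units (rees_carrier :: ('g, 'a) rees set) rees_mult"
  unfolding has_local_units_def
proof
  fix x :: "('g,'a) rees"
  assume xc: "x \<in> rees_carrier"
  show "\<exists>u\<in>idempotents rees_carrier rees_mult. \<exists>v\<in>idempotents rees_carrier rees_mult.
          rees_mult u x = x \<and> rees_mult x v = x"
  proof (cases x)
    case RZero
    have "RZero \<in> idempotents (rees_carrier :: ('g, 'a) rees set) rees_mult"
      by (simp add: idempotents_def rees_carrier_def)
    with RZero show ?thesis by auto
  next
    case (RE a b s)
    with xc have s: "s \<noteq> 0" by (auto simp: rees_carrier_def)
    from lu obtain u v where "u * u = u" "v * v = v" "u * s = s" "s * v = s"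
      unfolding has_local_units_def idempotents_def by blast
    moreover have "u \<noteq> 0" "v \<noteq> 0" using s calculation by auto
    ultimately have "RE a a u \<in> idempotents (rees_carrier :: ('g, 'a) rees set) rees_mult"
       "RE b b v \<in> idempotents (rees_carrier :: ('g, 'a) rees set) rees_mult"
      "rees_mult (RE a a u) x = x" "rees_mult x (RE b b v) = x"
      using RE s by (auto simp: idempotents_def rees_carrier_def)
    then show ?thesis by blast
  qed
qed

lemma part3:
  fixes deg :: "'a::{semigroup_mult,mult_zero} \<Rightarrow> 'g::group_add"
  assumes graded: "is_graded (UNIV :: 'a set) (*) 0 deg"
    and lu: "has_local_units (UNIV :: 'a set) (*)"
  shows "strongly_graded (rees_carrier :: ('g, 'a) rees set) rees_mult RZero (rees_deg deg)"
  unfolding strongly_graded_def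
proof (intro allI set_eqI iffI)
  fix \<alpha> \<beta> :: 'g and x :: "('g,'a) rees"
  assume "x \<in> set_prod rees_mult (component rees_carrier RZero (rees_deg deg) \<alpha>)
             (component rees_carrier RZero (rees_deg deg) \<beta>)"
  then obtain y z where x: "x = rees_mult y z"
    and y: "y \<in> component rees_carrier RZero (rees_deg deg) \<alpha>"
    and z: "z \<in> component rees_carrier RZero (rees_deg deg) \<beta>"
    unfolding set_prod_def by blast
  show "x \<in> component rees_carrier RZero (rees_deg deg) (\<alpha> + \<beta>)"
  proof (cases "x = RZero")
    case True then show ?thesis by (simp add: component_def)
  next
    case False
    then obtain a b s c d t where yz: "y = RE a b s" "z = RE c d t"
      using x by (cases y; cases z) auto
    with x False have bc: "b = c" and st: "s * t \<noteq> 0" by (auto split: if_splits)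
    then have xx: "x = RE a d (s * t)" using x yz by simp
    have s0: "s \<noteq> 0" "t \<noteq> 0" using st by auto
    have dst: "deg (s * t) = deg s + deg t" using graded s0 st unfolding is_graded_def by blast
    have ya: "- a + deg s + b = \<alpha>" and zb: "- c + deg t + d = \<beta>"
      using y z yz by (auto simp: component_def)
    have "\<alpha> + \<beta> = (- a + deg s + b) + (- c + deg t + d)" using ya zb by simp
    also have "\<dots> = - a + deg (s * t) + d" using bc dst by (simp only: add.assoc add_minus_cancel)
    finally have "- a + deg (s * t) + d = \<alpha> + \<beta>" by simp
    then show ?thesis using xx st by (auto simp: component_def rees_carrier_def)
  qed
next
  fix \<alpha> \<beta> :: 'g and x :: "('g,'a) rees"
  assume xc: "x \<in> component rees_carrier RZero (rees_deg deg) (\<alpha> + \<beta>)"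
  have zc: "RZero \<in> component rees_carrier RZero (rees_deg deg) \<gamma>" for \<gamma>
    by (simp add: component_def)
  show "x \<in> set_prod rees_mult (component rees_carrier RZero (rees_deg deg) \<alpha>)
             (component rees_carrier RZero (rees_deg deg) \<beta>)"
  proof (cases x)
    case RZero
    then have "x = rees_mult RZero RZero" by simp
    then show ?thesis using zc unfolding set_prod_def by blast
  next
    case (RE a d s)
    with xc have s: "s \<noteq> 0" and dg: "- a + deg s + d = \<alpha> + \<beta>"
      by (auto simp: component_def rees_carrier_def)
    from lu obtain u where u: "u * u = u" "u * s = s"
      unfolding has_local_units_def idempotents_def by blast
    have u0: "u \<noteq> 0" using u s by auto
    have du: "deg u = 0" using deg_idem[OF graded u(1) u0] .
    define c where "c = a + \<alpha>"
    have "rees_deg deg (RE a c u) = \<alpha>" using du by (simp add: c_def add.assoc[symmetric])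
    then have y: "RE a c u \<in> component rees_carrier RZero (rees_deg deg) \<alpha>"
      using u0 by (auto simp: component_def rees_carrier_def)
    have "rees_deg deg (RE c d s) = - \<alpha> + (- a + deg s + d)"
      by (simp only: rees_deg.simps c_def add.assoc minus_add)
    also have "\<dots> = \<beta>" using dg by (simp add: add.assoc[symmetric])
    finally have z: "RE c d s \<in> component rees_carrier RZero (rees_deg deg) \<beta>"
      using s by (auto simp: component_def rees_carrier_def)
    have "x = rees_mult (RE a c u) (RE c d s)" using RE u s by simp
    then show ?thesis using y z unfolding set_prod_def by blast
  qed
qed

lemma part4:
  fixes deg :: "'a::{semigroup_mult,mult_zero} \<Rightarrow> 'g::group_add"
  assumes graded: "is_graded (UNIV :: 'a set) (*) 0 deg"
  shows "semigroup_iso (phi deg) smash_carrier (smash_mult deg)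
           (component rees_carrier RZero (rees_deg deg) 0) rees_mult"
  unfolding semigroup_iso_def
proof (intro conjI ballI)
  show "bij_betw (phi deg) smash_carrier (component rees_carrier RZero (rees_deg deg) 0)"
    unfolding bij_betw_def
  proof (intro conjI)
    show "inj_on (phi deg) smash_carrier"
    proof (rule inj_onI)
      fix x y assume "x \<in> smash_carrier" "y \<in> smash_carrier" "phi deg x = phi deg y"
      then show "x = y" by (cases x; cases y) auto
    qed
    show "phi deg ` smash_carrier = component rees_carrier RZero (rees_deg deg) 0"
    proof (rule set_eqI, rule iffI)
      fix y assume "y \<in> phi deg ` smash_carrier"
      then obtain x where x: "x \<in> smash_carrier" "y = phi deg x" by blast
      show "y \<in> component rees_carrier RZero (rees_deg deg) 0"
      proof (cases x)
        case SZero then show ?thesis using x by (simp add: component_def)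
      next
        case (SP s \<alpha>)
        then have "s \<noteq> 0" using x by (auto simp: smash_carrier_def)
        moreover have "rees_deg deg (RE (deg s + \<alpha>) \<alpha> s) = 0"
          by (simp add: minus_add add.assoc)
        ultimately show ?thesis using x SP by (auto simp: component_def rees_carrier_def)
      qed
    next
      fix y assume y: "y \<in> component rees_carrier RZero (rees_deg deg) 0"
      show "y \<in> phi deg ` smash_carrier"
      proof (cases y)
        case RZero
        then have "y = phi deg SZero" by simp
        moreover have "SZero \<in> smash_carrier" by (simp add: smash_carrier_def)
        ultimately show ?thesis by blast
      next
        case (RE a b s)
        with y have s: "s \<noteq> 0" and d: "- a + deg s + b = 0"
          by (auto simp: component_def rees_carrier_def)
        from d have "a = deg s + b"
          by (metis add.assoc add_minus_cancel add_0_right minus_unique add.left_inverse neg_eq_iff_add_eq_0)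
        then have "y = phi deg (SP s b)" using RE by simp
        moreover have "SP s b \<in> smash_carrier" using s by (simp add: smash_carrier_def)
        ultimately show ?thesis by blast
      qed
    qed
  qed
next
  fix x y assume x: "x \<in> (smash_carrier :: ('a,'g) smash set)" and y: "y \<in> (smash_carrier :: ('a,'g) smash set)"
  show "phi deg (smash_mult deg x y) = rees_mult (phi deg x) (phi deg y)"
  proof (cases x)
    case SZero then show ?thesis by simp
  next
    case (SP s \<alpha>)
    note xs = SP
    show ?thesis
    proof (cases y)
      case SZero then show ?thesis using xs by simp
    next
      case (SP t \<beta>)
      have s: "s \<noteq> 0" "t \<noteq> 0" using x y xs SP by (auto simp: smash_carrier_def)
      have cond: "(deg t = \<alpha> + - \<beta>) = (\<alpha> = deg t + \<beta>)"
        by (metis add.assoc add.right_inverse add_0_right diff_add_cancel diff_conv_add_uminus)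
      show ?thesis
      proof (cases "s * t = 0")
        case True then show ?thesis using xs SP s by auto
      next
        case False
        have dst: "deg (s * t) = deg s + deg t" using graded s False unfolding is_graded_def by blast
        show ?thesis using xs SP s False cond dst by (auto simp: add.assoc)
      qed
    qed
  qed
qed

lemma inv_char:
  fixes s :: "'a::{semigroup_mult,mult_zero}" and a b :: 'g
  assumes "s \<noteq> 0"
  shows "(t \<in> rees_carrier \<and> rees_mult (rees_mult (RE a b s) t) (RE a b s) = RE a b s
           \<and> rees_mult (rees_mult t (RE a b s)) t = t)
         \<longleftrightarrow> (\<exists>r. t = RE b a r \<and> s * r * s = s \<and> r * s * r = r)"
proof (cases t)
  case RZero then show ?thesis by simp
next
  case (RE c d r)
  show ?thesis
  proof
    assume h: "t \<in> rees_carrier \<and> rees_mult (rees_mult (RE a b s) t) (RE a b s) = RE a b s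
           \<and> rees_mult (rees_mult t (RE a b s)) t = t"
    then have "b = c" using RE by (auto split: if_splits)
    moreover have "s * r \<noteq> 0" using h RE \<open>b = c\<close> by (auto split: if_splits)
    moreover have "d = a" using h RE \<open>b = c\<close> \<open>s * r \<noteq> 0\<close> by (auto split: if_splits)
    moreover have "s * r * s = s" using h RE calculation by (auto simp: ee_def split: if_splits)
    moreover have "r \<noteq> 0" using h RE by (auto simp: rees_carrier_def)
    moreover have "r * s \<noteq> 0" using \<open>s * r * s = s\<close> assms
      by (metis mult.assoc mult_zero_right)
    moreover have "r * s * r = r" using h RE calculation by (auto simp: ee_def split: if_splits)
    ultimately show "\<exists>r. t = RE b a r \<and> s * r * s = s \<and> r * s * r = r" using RE by auto
  next
    assume "\<exists>r. t = RE b a r \<and> s * r * s = s \<and> r * s * r = r"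
    then obtain r where r: "t = RE b a r" "s * r * s = s" "r * s * r = r" by blast
    have sr: "s * r \<noteq> 0" using r assms by (metis mult_zero_left)
    have rs: "r * s \<noteq> 0" using r assms by (metis mult.assoc mult_zero_right)
    have r0: "r \<noteq> 0" using sr by auto
    show "t \<in> rees_carrier \<and> rees_mult (rees_mult (RE a b s) t) (RE a b s) = RE a b s
           \<and> rees_mult (rees_mult t (RE a b s)) t = t"
      using r sr rs r0 assms by (simp add: rees_carrier_def)
  qed
qed

lemma ex1_transfer:
  assumes "\<And>t. P t \<longleftrightarrow> (\<exists>r. t = f r \<and> Q r)" "inj f"
  shows "(\<exists>!t. P t) \<longleftrightarrow> (\<exists>!r. Q r)"
  using assms unfolding inj_def by (metis (mono_tags, lifting))

lemma part5:
  fixes S :: "'a::{semigroup_mult,mult_zero} set"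
  shows "inverse_semigroup (UNIV :: 'a set) (*)
           \<longleftrightarrow> inverse_semigroup (rees_carrier :: ('g, 'a) rees set) rees_mult"
proof
  assume invS: "inverse_semigroup (UNIV :: 'a set) (*)"
  show "inverse_semigroup (rees_carrier :: ('g, 'a) rees set) rees_mult"
    unfolding inverse_semigroup_def
  proof
    fix x :: "('g,'a) rees" assume xc: "x \<in> rees_carrier"
    show "\<exists>!t. t \<in> rees_carrier \<and> rees_mult (rees_mult x t) x = x \<and> rees_mult (rees_mult t x) t = t"
    proof (cases x)
      case RZero
      then show ?thesis by (intro ex1I[of _ RZero]) (auto simp: rees_carrier_def)
    next
      case (RE a b s)
      with xc have s: "s \<noteq> 0" by (auto simp: rees_carrier_def)
      have q: "\<exists>!r. s * r * s = s \<and> r * s * r = r" using invS unfolding inverse_semigroup_def by auto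
      have inj: "inj (RE b a)" by (auto simp: inj_def)
      show ?thesis unfolding RE
        by (rule ex1_transfer[THEN iffD2, OF inv_char[OF s] inj q])
    qed
  qed
next
  assume invR: "inverse_semigroup (rees_carrier :: ('g, 'a) rees set) rees_mult"
  show "inverse_semigroup (UNIV :: 'a set) (*)"
    unfolding inverse_semigroup_def
  proof
    fix s :: 'a
    show "\<exists>!t. t \<in> UNIV \<and> s * t * s = s \<and> t * s * t = t"
    proof (cases "s = 0")
      case True
      then show ?thesis by (intro ex1I[of _ 0]) auto
    next
      case False
      have xc: "RE (undefined::'g) undefined s \<in> rees_carrier" using False by (simp add: rees_carrier_def)
      have inj: "inj (RE (undefined::'g) undefined)" by (auto simp: inj_def)
      have "\<exists>!t. t \<in> rees_carrier \<and> rees_mult (rees_mult (RE (undefined::'g) undefined s) t) (RE undefined undefined s) = RE undefined undefined s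
               \<and> rees_mult (rees_mult t (RE undefined undefined s)) t = t"
        using invR xc unfolding inverse_semigroup_def by blast
      then have "\<exists>!r. s * r * s = s \<and> r * s * r = r"
        by (rule ex1_transfer[THEN iffD1, OF inv_char[OF False] inj])
      then show ?thesis by simp
    qed
  qed
qed

theorem proposition3p7:
  fixes deg :: "'a::{semigroup_mult,mult_zero} \<Rightarrow> 'g::group_add"
  assumes graded: "is_graded (UNIV :: 'a set) (*) 0 deg"
    and lu: "has_local_units (UNIV :: 'a set) (*)"
  shows "idempotents (rees_carrier :: ('g, 'a) rees set) rees_mult
           = {ee (\<alpha>::'g) \<alpha> u | u \<alpha>. u \<in> idempotents (UNIV :: 'a set) (*)}
    \<and> has_local_units (rees_carrier :: ('g, 'a) rees set) rees_mult
    \<and> strongly_graded (rees_carrier :: ('g, 'a) rees set) rees_mult RZero (rees_deg deg)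
    \<and> semigroup_iso (phi deg) smash_carrier (smash_mult deg)
           (component rees_carrier RZero (rees_deg deg) 0) rees_mult
    \<and> (inverse_semigroup (UNIV :: 'a set) (*)
           \<longleftrightarrow> inverse_semigroup (rees_carrier :: ('g, 'a) rees set) rees_mult)"
  using part1 part2[OF lu] part3[OF graded lu] part4[OF graded] part5 by blast

end
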